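(* Let $H$ be a complex Hilbert space, let $P \in \mathcal{L}(H)$ be a positive operator (i.e. $\langle Px,x\rangle \ge 0$ for all $x\in H$), and let $(p_n)$ be a sequence of polynomials with positive coefficients such that $p_n(P) \to S$ in the operator norm of $\mathcal{L}(H)$, for some $S \in \mathcal{L}(H)$. If $P$ satisfies the property $\mathcal{N}$, then $S$ satisfies the property $\mathcal{N}$.
   Context: $\mathcal{L}(H)$ is the Banach algebra of bounded linear operators on $H$ with the operator norm; for a polynomial $p(t) = \sum_{k=0}^m \alpha_k t^k$, $p(P) = \sum_{k=0}^m \alpha_k P^k$ with $P^0 = I$. An operator $T \in \mathcal{L}(H)$ satisfies the property $\mathcal{N}$ if there exists $x_0 \in H$ with $\|x_0\|=1$ and $\|Tx_0\| = \|T\|$. *)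

theory Defs
  imports "HOL-Analysis.Analysis" "HOL-Computational_Algebra.Polynomial"
begin

class complex_inner = real_normed_vector +
  fixes scaleC :: "complex \<Rightarrow> 'a \<Rightarrow> 'a" (infixr "*\<^sub>C" 75)
    and cinner :: "'a \<Rightarrow> 'a \<Rightarrow> complex"
  assumes scaleC_add_right: "a *\<^sub>C (x + y) = a *\<^sub>C x + a *\<^sub>C y"
    and scaleC_add_left: "(a + b) *\<^sub>C x = a *\<^sub>C x + b *\<^sub>C x"
    and scaleC_scaleC: "a *\<^sub>C (b *\<^sub>C x) = (a * b) *\<^sub>C x"
    and scaleC_one: "1 *\<^sub>C x = x"
    and scaleR_scaleC: "r *\<^sub>R x = complex_of_real r *\<^sub>C x"
    and cinner_add_left: "cinner (x + y) z = cinner x z + cinner y z"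
    and cinner_scaleC_left: "cinner (a *\<^sub>C x) y = a * cinner x y"
    and cinner_commute: "cinner x y = cnj (cinner y x)"
    and cinner_self_Im: "Im (cinner x x) = 0"
    and cinner_self_Re_nonneg: "0 \<le> Re (cinner x x)"
    and cinner_self_eq_0: "cinner x x = 0 \<longleftrightarrow> x = 0"
    and norm_cinner: "norm x = sqrt (Re (cinner x x))"

class chilbert = complex_inner + complete_space

definition bounded_clinear_op :: "('a::complex_inner \<Rightarrow> 'a) \<Rightarrow> bool" where
  "bounded_clinear_op T \<longleftrightarrow> bounded_linear T \<and> (\<forall>c x. T (c *\<^sub>C x) = c *\<^sub>C T x)"

definition positive_op :: "('a::complex_inner \<Rightarrow> 'a) \<Rightarrow> bool" where
  "positive_op P \<longleftrightarrow> (\<forall>x. Im (cinner (P x) x) = 0 \<and> 0 \<le> Re (cinner (P x) x))"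

definition poly_op :: "real poly \<Rightarrow> ('a::complex_inner \<Rightarrow> 'a) \<Rightarrow> 'a \<Rightarrow> 'a" where
  "poly_op p P x = (\<Sum>k\<le>degree p. coeff p k *\<^sub>R (P ^^ k) x)"

definition property_N :: "('a::complex_inner \<Rightarrow> 'a) \<Rightarrow> bool" where
  "property_N T \<longleftrightarrow> (\<exists>x0. norm x0 = 1 \<and> norm (T x0) = onorm T)"

end

theory Submission imports Defs begin

lemma ci_zero_left: "cinner (0::'a::complex_inner) y = 0"
  using cinner_add_left[of "0::'a" 0 y] by simp

lemma ci_add_right: "cinner (x::'a::complex_inner) (y+z) = cinner x y + cinner x z"
  by (metis cinner_commute cinner_add_left complex_cnj_add)

lemma ci_scaleC_right: "cinner (x::'a::complex_inner) (a *\<^sub>C y) = cnj a * cinner x y"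
  by (metis cinner_commute cinner_scaleC_left complex_cnj_mult)

lemma ci_scaleR_left: "cinner (r *\<^sub>R (x::'a::complex_inner)) y = of_real r * cinner x y"
  by (simp add: scaleR_scaleC cinner_scaleC_left)

lemma ci_scaleR_right: "cinner (x::'a::complex_inner) (r *\<^sub>R y) = of_real r * cinner x y"
  by (simp add: scaleR_scaleC ci_scaleC_right)

lemma ci_norm_sq: "(norm (x::'a::complex_inner))^2 = Re (cinner x x)"
  by (simp add: norm_cinner cinner_self_Re_nonneg)

lemma ci_Re_sym: "Re (cinner (x::'a::complex_inner) y) = Re (cinner y x)"
  by (subst cinner_commute) simp

lemma expand:
  fixes f :: "'a::complex_inner \<Rightarrow> 'a"
  assumes "linear f"
  shows "Re (cinner (f (a *\<^sub>R x + b *\<^sub>R y)) (a *\<^sub>R x + b *\<^sub>R y)) =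
    a^2 * Re (cinner (f x) x) + a*b*(Re (cinner (f x) y) + Re (cinner (f y) x)) + b^2 * Re (cinner (f y) y)"
  using assms by (simp add: linear_add linear_scale cinner_add_left ci_add_right ci_scaleR_left ci_scaleR_right
     power2_eq_square algebra_simps)

lemma cs_Re: "Re (cinner (u::'a::complex_inner) v) \<le> norm u * norm v"
proof (cases "u = 0 \<or> v = 0")
  case True
  then show ?thesis
    by (metis ci_zero_left cinner_commute complex_cnj_zero mult_zero_left mult_zero_right norm_zero order_refl zero_complex.sel(1))
next
  case False
  then have pos: "norm u * norm v > 0" by simp
  have "0 \<le> Re (cinner (id (norm v *\<^sub>R u + (- norm u) *\<^sub>R v)) (norm v *\<^sub>R u + (- norm u) *\<^sub>R v))"
    by (simp add: cinner_self_Re_nonneg)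
  also have "\<dots> = (norm v)^2 * (norm u)^2 - 2 * (norm u * norm v) * Re (cinner u v) + (norm u)^2 * (norm v)^2"
    by (subst expand) (auto simp: linear_id ci_norm_sq ci_Re_sym[of v u])
  finally have "(norm u * norm v) * Re (cinner u v) \<le> (norm u * norm v) * (norm u * norm v)"
    by (simp add: power2_eq_square algebra_simps)
  with pos show ?thesis by (metis mult_le_cancel_left_pos)
qed

lemma herm_Re:
  fixes P :: "'a::complex_inner \<Rightarrow> 'a"
  assumes "bounded_clinear_op P" "positive_op P"
  shows "Re (cinner (P x) y) = Re (cinner (P y) x)"
proof -
  have lin: "linear P" and cl: "\<And>c x. P (c *\<^sub>C x) = c *\<^sub>C P x"
    using assms(1) by (auto simp: bounded_clinear_op_def bounded_linear.linear)
  have "Im (cinner (P (x + \<i> *\<^sub>C y)) (x + \<i> *\<^sub>C y)) = 0"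
    using assms(2) by (simp add: positive_op_def)
  moreover have "cinner (P (x + \<i> *\<^sub>C y)) (x + \<i> *\<^sub>C y) =
      cinner (P x) x - \<i> * cinner (P x) y + \<i> * cinner (P y) x + cinner (P y) y"
    by (simp add: linear_add[OF lin] cl cinner_add_left ci_add_right ci_scaleC_right cinner_scaleC_left algebra_simps)
  moreover have "Im (cinner (P x) x) = 0" "Im (cinner (P y) y) = 0"
    using assms(2) by (auto simp: positive_op_def)
  ultimately show ?thesis by simp
qed

lemma eigen:
  fixes P :: "'a::complex_inner \<Rightarrow> 'a"
  assumes bc: "bounded_clinear_op P" and pos: "positive_op P"
    and u1: "norm u = 1" and nu: "norm (P u) = onorm P"
  shows "P u = onorm P *\<^sub>R u"
proof -
  have bl: "bounded_linear P" using bc by (simp add: bounded_clinear_op_def)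
  have lin: "linear P" using bl by (simp add: bounded_linear.linear)
  define l where "l = onorm P"
  have l0: "0 \<le> l" unfolding l_def by (rule onorm_pos_le[OF bl])
  show ?thesis
  proof (cases "l = 0")
    case True
    then show ?thesis using nu l_def by simp
  next
    case False
    with l0 have lp: "l > 0" by simp
    define v where "v = P u"
    define m where "m = Re (cinner (P u) u)"
    have nv: "norm v = l" using nu by (simp add: v_def l_def)
    have Bvv: "Re (cinner (P v) v) \<le> l^3"
    proof -
      have "Re (cinner (P v) v) \<le> norm (P v) * norm v" by (rule cs_Re)
      also have "\<dots> \<le> (l * norm v) * norm v"
        using onorm[OF bl, of v] by (simp add: l_def mult_right_mono)
      finally show ?thesis using nv by (simp add: power3_eq_cube)
    qed
    have Buv: "Re (cinner (P u) v) = l^2" using nv by (simp add: v_def ci_norm_sq[symmetric])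
    have Bvu: "Re (cinner (P v) u) = l^2" using Buv herm_Re[OF bc pos, of v u] by simp
    have "0 \<le> Re (cinner (P (l *\<^sub>R u + (-1) *\<^sub>R v)) (l *\<^sub>R u + (-1) *\<^sub>R v))"
      using pos by (simp add: positive_op_def)
    also have "\<dots> = l^2 * m - l * (l^2 + l^2) + Re (cinner (P v) v)"
      by (subst expand[OF lin]) (simp add: Buv Bvu m_def)
    finally have "0 \<le> l^2 * m - l * (l^2 + l^2) + l^3" using Bvv by linarith
    then have "l^2 * l \<le> l^2 * m" by (simp add: power2_eq_square power3_eq_cube algebra_simps)
    then have lm: "l \<le> m" using lp by (simp add: mult_le_cancel_left_pos)
    have "(norm (P u - l *\<^sub>R u))^2 = Re (cinner (id (1 *\<^sub>R P u + (-l) *\<^sub>R u)) (1 *\<^sub>R P u + (-l) *\<^sub>R u))"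
      by (simp add: ci_norm_sq)
    also have "\<dots> = l^2 - l * (m + m) + l^2"
      by (subst expand[OF linear_id]) (simp add: ci_norm_sq[symmetric] nu l_def u1 m_def ci_Re_sym[of u "P u"])
    also have "\<dots> \<le> 0" using lm lp by (simp add: power2_eq_square algebra_simps mult_left_mono)
    finally have "norm (P u - l *\<^sub>R u) = 0" by simp
    then show ?thesis by (simp add: l_def)
  qed
qed

lemma bl_pow: "bounded_linear (P::'a::real_normed_vector \<Rightarrow> 'a) \<Longrightarrow> bounded_linear (P ^^ k)"
proof (induction k)
  case 0
  have "P^^0 = (\<lambda>x. x)" by (simp add: fun_eq_iff)
  then show ?case using bounded_linear_ident by metis
next
  case (Suc k)
  then have "bounded_linear (\<lambda>x. P ((P^^k) x))" using bounded_linear_compose[of P "P^^k"] by simp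
  then show ?case by (simp add: o_def)
qed

lemma norm_pow: "bounded_linear (P::'a::real_normed_vector \<Rightarrow> 'a) \<Longrightarrow> norm ((P ^^ k) x) \<le> onorm P ^ k * norm x"
proof (induction k arbitrary: x)
  case 0 then show ?case by simp
next
  case (Suc k)
  have "norm ((P ^^ Suc k) x) = norm (P ((P^^k) x))" by simp
  also have "\<dots> \<le> onorm P * norm ((P^^k) x)" by (rule onorm[OF Suc.prems])
  also have "\<dots> \<le> onorm P * (onorm P ^ k * norm x)"
    by (intro mult_left_mono Suc.IH Suc.prems onorm_pos_le)
  finally show ?case by (simp add: algebra_simps)
qed

lemma pow_eig: "linear (P::'a::real_vector \<Rightarrow> 'a) \<Longrightarrow> P u = l *\<^sub>R u \<Longrightarrow> (P ^^ k) u = l^k *\<^sub>R u"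
  by (induction k) (simp_all add: linear_scale)

lemma bl_polyop:
  assumes "bounded_linear (P::'a::complex_inner \<Rightarrow> 'a)"
  shows "bounded_linear (poly_op p P)"
proof -
  have "bounded_linear (\<lambda>x. coeff p k *\<^sub>R (P ^^ k) x)" for k
    using bounded_linear_compose[OF bounded_linear_scaleR_right bl_pow[OF assms, of k]] .
  then have "bounded_linear (\<lambda>x. \<Sum>k\<le>degree p. coeff p k *\<^sub>R (P ^^ k) x)"
    by (rule bounded_linear_sum)
  then show ?thesis unfolding poly_op_def[abs_def] .
qed

lemma norm_polyop:
  assumes "bounded_linear P" "\<And>k. 0 \<le> coeff p k"
  shows "norm (poly_op p P x) \<le> poly p (onorm P) * norm x"
proof -
  have "norm (poly_op p P x) \<le> (\<Sum>k\<le>degree p. norm (coeff p k *\<^sub>R (P ^^ k) x))"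
    unfolding poly_op_def by (rule norm_sum)
  also have "\<dots> \<le> (\<Sum>k\<le>degree p. coeff p k * onorm P ^ k * norm x)"
    by (intro sum_mono) (simp add: assms(2) mult.assoc mult_left_mono norm_pow[OF assms(1)])
  also have "\<dots> = poly p (onorm P) * norm x"
    by (simp add: poly_altdef sum_distrib_right)
  finally show ?thesis .
qed

lemma polyop_eig:
  assumes "linear (P::'a::complex_inner \<Rightarrow> 'a)" "P u = l *\<^sub>R u"
  shows "poly_op p P u = poly p l *\<^sub>R u"
  unfolding poly_op_def poly_altdef scaleR_sum_left
  by (intro sum.cong refl) (simp add: pow_eig[OF assms])

theorem proposition2p12:
  fixes P S :: "'a::chilbert \<Rightarrow> 'a" and p :: "nat \<Rightarrow> real poly"
  assumes "bounded_clinear_op P" and "positive_op P"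
    and "bounded_clinear_op S"
    and "\<And>n k. 0 \<le> coeff (p n) k"
    and "(\<lambda>n. onorm (\<lambda>x. poly_op (p n) P x - S x)) \<longlonglongrightarrow> 0"
    and "property_N P"
  shows "property_N S"
proof -
  have blP: "bounded_linear P" and blS: "bounded_linear S"
    using assms(1,3) by (auto simp: bounded_clinear_op_def)
  define l where "l = onorm P"
  obtain u where u1: "norm u = 1" and nu: "norm (P u) = onorm P"
    using assms(6) by (auto simp: property_N_def)
  have eig: "P u = l *\<^sub>R u" unfolding l_def by (rule eigen[OF assms(1,2) u1 nu])
  define d where "d n = onorm (\<lambda>x. poly_op (p n) P x - S x)" for n
  have bld: "bounded_linear (\<lambda>x. poly_op (p n) P x - S x)" for n
    by (intro bounded_linear_sub bl_polyop blP blS)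
  have d0: "0 \<le> d n" for n unfolding d_def by (rule onorm_pos_le[OF bld])
  have le1: "norm (S u) \<le> onorm S" using onorm[OF blS, of u] u1 by simp
  have le2: "onorm S \<le> norm (S u) + 2 * d n" for n
  proof (rule onorm_bound)
    show "0 \<le> norm (S u) + 2 * d n" using d0[of n] by simp
  next
    fix x
    have Tu: "poly (p n) l \<le> norm (S u) + d n"
    proof -
      have "poly (p n) l \<le> norm (poly_op (p n) P u)"
        using polyop_eig[OF bounded_linear.linear[OF blP] eig, of "p n"] u1 by simp
      also have "\<dots> \<le> norm (S u) + norm (poly_op (p n) P u - S u)" by (rule norm_triangle_sub)
      also have "norm (poly_op (p n) P u - S u) \<le> d n"
        using onorm[OF bld[of n], of u] u1 by (simp add: d_def)
      finally show ?thesis by simp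
    qed
    have "norm (S x) \<le> norm (poly_op (p n) P x) + norm (poly_op (p n) P x - S x)"
      using norm_triangle_ineq4[of "poly_op (p n) P x" "poly_op (p n) P x - S x"] by simp
    also have "\<dots> \<le> poly (p n) l * norm x + d n * norm x"
      using norm_polyop[OF blP assms(4)[of n], of x] onorm[OF bld[of n], of x]
      by (simp add: l_def d_def)
    also have "\<dots> \<le> (norm (S u) + d n) * norm x + d n * norm x"
      using Tu by (simp add: mult_right_mono)
    finally show "norm (S x) \<le> (norm (S u) + 2 * d n) * norm x" by (simp add: algebra_simps)
  qed
  have lim: "(\<lambda>n. norm (S u) + 2 * d n) \<longlonglongrightarrow> norm (S u) + 2 * 0"
    unfolding d_def by (intro tendsto_intros assms(5))
  have "onorm S \<le> norm (S u)"
    using LIMSEQ_le_const[OF lim] le2 by auto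
  with le1 u1 show ?thesis unfolding property_N_def by (intro exI[of _ u]) simp
qed

end
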